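(* Let $P\subset\mathbb{P}^7$ be a fixed plane. The intersection of three generic quadrics in $\mathbb{P}^7$ containing $P$ is smooth.
   Context: "Generic quadrics containing $P$" means generic elements of the $30$-dimensional space of quadratic forms on $\mathbb{C}^8$ vanishing on $P$ (i.e. lying in a nonempty Zariski open subset of the relevant parameter space). *)

theory Defs
  imports "HOL-Analysis.Analysis"
begin

inductive_set poly_fun :: "(('v \<Rightarrow> complex) \<Rightarrow> complex) set" where
  const: "(\<lambda>_. c) \<in> poly_fun"
| var:   "(\<lambda>z. z v) \<in> poly_fun"
| add:   "f \<in> poly_fun \<Longrightarrow> g \<in> poly_fun \<Longrightarrow> (\<lambda>z. f z + g z) \<in> poly_fun"
| mult:  "f \<in> poly_fun \<Longrightarrow> g \<in> poly_fun \<Longrightarrow> (\<lambda>z. f z * g z) \<in> poly_fun"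

text \<open>A triple of quadratic forms on C^8 is given by coefficients c (k,i,j), k in 3,
  of the monomials x_i x_j with i \<le> j (entries with i > j are ignored).\<close>
type_synonym quad_triple = "3 \<times> 8 \<times> 8 \<Rightarrow> complex"

definition coef :: "quad_triple \<Rightarrow> 3 \<Rightarrow> 8 \<Rightarrow> 8 \<Rightarrow> complex" where
  "coef c k i j = (if i \<le> j then c (k, i, j) else 0)"

definition quad :: "quad_triple \<Rightarrow> 3 \<Rightarrow> complex ^ 8 \<Rightarrow> complex" where
  "quad c k x = (\<Sum>i\<in>UNIV. \<Sum>j\<in>UNIV. coef c k i j * x $ i * x $ j)"

definition quad_grad :: "quad_triple \<Rightarrow> 3 \<Rightarrow> complex ^ 8 \<Rightarrow> complex ^ 8" where
  "quad_grad c k x = (\<chi> l. (\<Sum>j\<in>UNIV. coef c k l j * x $ j) + (\<Sum>i\<in>UNIV. coef c k i l * x $ i))"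

text \<open>Plane P = projectivisation of span_C {u1,u2,u3}, with u1,u2,u3 C-linearly independent.\<close>
definition lin_indep3 :: "complex ^ 8 \<Rightarrow> complex ^ 8 \<Rightarrow> complex ^ 8 \<Rightarrow> bool" where
  "lin_indep3 u1 u2 u3 \<longleftrightarrow> (\<forall>a b d. a *s u1 + b *s u2 + d *s u3 = 0 \<longrightarrow> a = 0 \<and> b = 0 \<and> d = 0)"

definition contains_plane :: "quad_triple \<Rightarrow> complex ^ 8 \<Rightarrow> complex ^ 8 \<Rightarrow> complex ^ 8 \<Rightarrow> bool" where
  "contains_plane c u1 u2 u3 \<longleftrightarrow> (\<forall>k a b d. quad c k (a *s u1 + b *s u2 + d *s u3) = 0)"

text \<open>The intersection X = V(q_1,q_2,q_3) in P^7 is smooth (of codimension 3): at every point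
  of X the Jacobian matrix of (q_1,q_2,q_3) has rank 3, i.e. the three gradients are linearly
  independent over C.\<close>
definition smooth_intersection :: "quad_triple \<Rightarrow> bool" where
  "smooth_intersection c \<longleftrightarrow>
     (\<forall>x :: complex ^ 8. x \<noteq> 0 \<and> (\<forall>k. quad c k x = 0) \<longrightarrow>
        (\<forall>a :: 3 \<Rightarrow> complex. (\<Sum>k\<in>UNIV. a k *s quad_grad c k x) = 0 \<longrightarrow> (\<forall>k. a k = 0)))"

end

theory Submission
  imports Defs "Jordan_Normal_Form.Determinant" "HOL-Computational_Algebra.Polynomial"
begin

lemma pf_add: "f \<in> poly_fun \<Longrightarrow> g \<in> poly_fun \<Longrightarrow> (\<lambda>z. f z + g z) \<in> poly_fun"
  by (rule poly_fun.add)
lemma pf_mult: "f \<in> poly_fun \<Longrightarrow> g \<in> poly_fun \<Longrightarrow> (\<lambda>z. f z * g z) \<in> poly_fun"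
  by (rule poly_fun.mult)

lemma pf_sum:
  assumes "finite A" "\<And>a. a \<in> A \<Longrightarrow> (\<lambda>z. f a z) \<in> poly_fun"
  shows "(\<lambda>z. \<Sum>a\<in>A. f a z) \<in> poly_fun"
  using assms
proof (induction A rule: finite_induct)
  case empty
  then show ?case using poly_fun.const[of 0] by simp
next
  case (insert x F)
  then have "(\<lambda>z. f x z + (\<Sum>a\<in>F. f a z)) \<in> poly_fun"
    by (intro poly_fun.add) auto
  then show ?case using insert by simp
qed

lemma pf_prod:
  assumes "finite A" "\<And>a. a \<in> A \<Longrightarrow> (\<lambda>z. f a z) \<in> poly_fun"
  shows "(\<lambda>z. \<Prod>a\<in>A. f a z) \<in> poly_fun"
  using assms
proof (induction A rule: finite_induct)
  case empty
  then show ?case using poly_fun.const[of 1] by simp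
next
  case (insert x F)
  then have "(\<lambda>z. f x z * (\<Prod>a\<in>F. f a z)) \<in> poly_fun"
    by (intro poly_fun.mult) auto
  then show ?case using insert by simp
qed

lemma pf_if: "f \<in> poly_fun \<Longrightarrow> g \<in> poly_fun \<Longrightarrow> (\<lambda>z. if P then f z else g z) \<in> poly_fun"
  by (cases P) auto

lemma pf_compose:
  assumes "f \<in> poly_fun" "\<And>v. (\<lambda>c. \<sigma> c v) \<in> poly_fun"
  shows "(\<lambda>c. f (\<sigma> c)) \<in> poly_fun"
  using assms(1)
proof (induction f rule: poly_fun.induct)
  case (const c)
  then show ?case by (rule poly_fun.const)
next
  case (var v)
  then show ?case using assms(2) by simp
next
  case (add f g)
  then show ?case by (intro poly_fun.add) (simp_all add: add.IH)
next
  case (mult f g)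
  then show ?case by (intro poly_fun.mult) (simp_all add: mult.IH)
qed

lemma pf_coef: "(\<lambda>c. coef c k i j) \<in> poly_fun"
  unfolding coef_def by (intro pf_if poly_fun.var poly_fun.const)

section \<open>Symmetrised coefficients and coordinate change\<close>

definition Sy :: "quad_triple \<Rightarrow> 3 \<Rightarrow> 8 \<Rightarrow> 8 \<Rightarrow> complex" where
  "Sy c k i j = coef c k i j + coef c k j i"

lemma quad_Sy: "quad c k x = (\<Sum>i\<in>UNIV. \<Sum>j\<in>UNIV. Sy c k i j * x$i * x$j) / 2"
proof -
  have "(\<Sum>i\<in>UNIV. \<Sum>j\<in>UNIV. coef c k j i * x$i * x$j) = (\<Sum>j\<in>UNIV. \<Sum>i\<in>UNIV. coef c k j i * x$i * x$j)"
    by (rule sum.swap)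
  also have "\<dots> = quad c k x" unfolding quad_def by (simp add: mult_ac)
  finally have "(\<Sum>i\<in>UNIV. \<Sum>j\<in>UNIV. Sy c k i j * x$i * x$j) = quad c k x + quad c k x"
    unfolding Sy_def quad_def by (simp add: algebra_simps sum.distrib)
  then show ?thesis by simp
qed

lemma grad_Sy: "quad_grad c k x $ l = (\<Sum>j\<in>UNIV. Sy c k l j * x$j)"
  unfolding quad_grad_def Sy_def by (simp add: algebra_simps sum.distrib)

definition Bm :: "quad_triple \<Rightarrow> complex^8^8 \<Rightarrow> 3 \<Rightarrow> 8 \<Rightarrow> 8 \<Rightarrow> complex" where
  "Bm c V k i j = (\<Sum>p\<in>UNIV. \<Sum>q\<in>UNIV. coef c k p q * V$p$i * V$q$j)"

definition tr :: "quad_triple \<Rightarrow> complex^8^8 \<Rightarrow> quad_triple" where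
  "tr c V = (\<lambda>(k,i,j). if i < j then Bm c V k i j + Bm c V k j i
                        else if i = j then Bm c V k i i else 0)"

lemma Sy_tr: "Sy (tr c V) k i j = (\<Sum>p\<in>UNIV. \<Sum>q\<in>UNIV. Sy c k p q * V$p$i * V$q$j)"
proof -
  have 1: "Sy (tr c V) k i j = Bm c V k i j + Bm c V k j i"
    unfolding Sy_def coef_def tr_def by auto
  have "Bm c V k j i = (\<Sum>q\<in>UNIV. \<Sum>p\<in>UNIV. coef c k q p * V$p$i * V$q$j)"
    unfolding Bm_def by (simp add: mult_ac)
  also have "\<dots> = (\<Sum>p\<in>UNIV. \<Sum>q\<in>UNIV. coef c k q p * V$p$i * V$q$j)"
    by (rule sum.swap)
  finally have "Bm c V k i j + Bm c V k j i = (\<Sum>p\<in>UNIV. \<Sum>q\<in>UNIV. Sy c k p q * V$p$i * V$q$j)"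
    unfolding Bm_def Sy_def by (simp add: algebra_simps sum.distrib)
  then show ?thesis using 1 by simp
qed

lemma sum4_prod:
  fixes a :: "8 \<Rightarrow> 8 \<Rightarrow> complex"
  shows "(\<Sum>p\<in>UNIV. \<Sum>q\<in>UNIV. a p q * (\<Sum>i\<in>UNIV. b p i) * (\<Sum>j\<in>UNIV. d q j))
       = (\<Sum>i\<in>UNIV. \<Sum>j\<in>UNIV. \<Sum>p\<in>UNIV. \<Sum>q\<in>UNIV. a p q * b p i * d q j)"
proof -
  have "(\<Sum>p\<in>UNIV. \<Sum>q\<in>UNIV. a p q * (\<Sum>i\<in>UNIV. b p i) * (\<Sum>j\<in>UNIV. d q j))
      = (\<Sum>p\<in>UNIV. \<Sum>q\<in>UNIV. \<Sum>i\<in>UNIV. \<Sum>j\<in>UNIV. a p q * b p i * d q j)"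
    by (simp add: sum_distrib_left sum_distrib_right mult_ac)
  also have "\<dots> = (\<Sum>p\<in>UNIV. \<Sum>i\<in>UNIV. \<Sum>q\<in>UNIV. \<Sum>j\<in>UNIV. a p q * b p i * d q j)"
    by (rule sum.cong[OF refl], rule sum.swap)
  also have "\<dots> = (\<Sum>i\<in>UNIV. \<Sum>p\<in>UNIV. \<Sum>q\<in>UNIV. \<Sum>j\<in>UNIV. a p q * b p i * d q j)"
    by (rule sum.swap)
  also have "\<dots> = (\<Sum>i\<in>UNIV. \<Sum>p\<in>UNIV. \<Sum>j\<in>UNIV. \<Sum>q\<in>UNIV. a p q * b p i * d q j)"
    by (intro sum.cong refl sum.swap)
  also have "\<dots> = (\<Sum>i\<in>UNIV. \<Sum>j\<in>UNIV. \<Sum>p\<in>UNIV. \<Sum>q\<in>UNIV. a p q * b p i * d q j)"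
    by (intro sum.cong refl sum.swap)
  finally show ?thesis .
qed

lemma quad_tr: "quad (tr c V) k w = quad c k (V *v w)"
proof -
  have "quad c k (V *v w) = (\<Sum>p\<in>UNIV. \<Sum>q\<in>UNIV. Sy c k p q * (\<Sum>i\<in>UNIV. V$p$i * w$i) * (\<Sum>j\<in>UNIV. V$q$j * w$j)) / 2"
    unfolding quad_Sy by (simp add: matrix_vector_mult_def)
  also have "\<dots> = (\<Sum>i\<in>UNIV. \<Sum>j\<in>UNIV. \<Sum>p\<in>UNIV. \<Sum>q\<in>UNIV. Sy c k p q * (V$p$i * w$i) * (V$q$j * w$j)) / 2"
    by (subst sum4_prod) simp
  also have "\<dots> = quad (tr c V) k w"
    unfolding quad_Sy Sy_tr by (simp add: sum_distrib_left sum_distrib_right mult_ac)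
  finally show ?thesis by simp
qed

lemma grad_tr: "quad_grad (tr c V) k w = transpose V *v quad_grad c k (V *v w)"
proof -
  have "(transpose V *v quad_grad c k (V *v w)) $ l = quad_grad (tr c V) k w $ l" for l
  proof -
    have "(transpose V *v quad_grad c k (V *v w)) $ l
        = (\<Sum>p\<in>UNIV. V$p$l * (\<Sum>q\<in>UNIV. Sy c k p q * (\<Sum>j\<in>UNIV. V$q$j * w$j)))"
      by (simp add: matrix_vector_mult_def transpose_def grad_Sy)
    also have "\<dots> = (\<Sum>p\<in>UNIV. \<Sum>q\<in>UNIV. \<Sum>j\<in>UNIV. Sy c k p q * V$p$l * V$q$j * w$j)"
      by (simp add: sum_distrib_left mult_ac)
    also have "\<dots> = (\<Sum>p\<in>UNIV. \<Sum>j\<in>UNIV. \<Sum>q\<in>UNIV. Sy c k p q * V$p$l * V$q$j * w$j)"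
      by (intro sum.cong refl sum.swap)
    also have "\<dots> = (\<Sum>j\<in>UNIV. \<Sum>p\<in>UNIV. \<Sum>q\<in>UNIV. Sy c k p q * V$p$l * V$q$j * w$j)"
      by (rule sum.swap)
    also have "\<dots> = quad_grad (tr c V) k w $ l"
      unfolding grad_Sy Sy_tr by (simp add: sum_distrib_left sum_distrib_right mult_ac)
    finally show ?thesis .
  qed
  then show ?thesis by (simp add: Finite_Cartesian_Product.vec_eq_iff)
qed

lemma smooth_tr:
  assumes VW: "V ** W = Finite_Cartesian_Product.mat 1" and sm: "smooth_intersection (tr c V)"
  shows "smooth_intersection c"
  unfolding smooth_intersection_def
proof (intro allI impI)
  fix x :: "complex^8" and a :: "3 \<Rightarrow> complex" and kk :: 3
  assume x: "x \<noteq> 0 \<and> (\<forall>k. quad c k x = 0)" and s: "(\<Sum>k\<in>UNIV. a k *s quad_grad c k x) = 0"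
  define w where "w = W *v x"
  have Vw: "V *v w = x" unfolding w_def by (simp add: matrix_vector_mul_assoc VW)
  have w0: "w \<noteq> 0" using Vw x by auto
  have q: "\<forall>k. quad (tr c V) k w = 0" using x by (simp add: quad_tr Vw)
  have "(\<Sum>k\<in>UNIV. a k *s quad_grad (tr c V) k w) = (\<Sum>k\<in>UNIV. a k *s (transpose V *v quad_grad c k x))"
    by (simp add: grad_tr Vw)
  also have "\<dots> = transpose V *v (\<Sum>k\<in>UNIV. a k *s quad_grad c k x)"
    by (simp add: vec.sum vec.scale)
  also have "\<dots> = 0" using s by simp
  finally show "a kk = 0" using sm w0 q unfolding smooth_intersection_def by blast
qed

type_synonym vr = "8 + 3"
type_synonym ex = "vr \<Rightarrow> nat"

definition mnm :: "ex \<Rightarrow> (vr \<Rightarrow> complex) \<Rightarrow> complex" where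
  "mnm e z = (\<Prod>v\<in>UNIV. z v ^ e v)"
definition degx :: "ex \<Rightarrow> nat" where "degx e = (\<Sum>i\<in>UNIV. e (Inl i))"
definition dega :: "ex \<Rightarrow> nat" where "dega e = (\<Sum>k\<in>UNIV. e (Inr k))"
definition Mons :: "nat \<Rightarrow> nat \<Rightarrow> ex set" where
  "Mons d1 d2 = {e. degx e = d1 \<and> dega e = d2}"
definition eadd :: "ex \<Rightarrow> ex \<Rightarrow> ex" where "eadd s t = (\<lambda>v. s v + t v)"
definition dln :: "vr \<Rightarrow> nat \<Rightarrow> ex" where "dln v n = (\<lambda>u. if u = v then n else 0)"

lemma mnm_add: "mnm (eadd s t) z = mnm s z * mnm t z"
  unfolding mnm_def eadd_def by (simp add: power_add prod.distrib)

lemma mnm_dln: "mnm (dln v n) z = z v ^ n"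
proof -
  have "mnm (dln v n) z = (\<Prod>u\<in>UNIV. if u = v then z v ^ n else 1)"
    unfolding mnm_def dln_def by (intro prod.cong) auto
  then show ?thesis by simp
qed

lemma mnm_zero: "mnm (\<lambda>_. 0) z = 1" unfolding mnm_def by simp

lemma degx_add: "degx (eadd s t) = degx s + degx t"
  unfolding degx_def eadd_def by (simp add: sum.distrib)
lemma dega_add: "dega (eadd s t) = dega s + dega t"
  unfolding dega_def eadd_def by (simp add: sum.distrib)
lemma degx_dln_l: "degx (dln (Inl i) n) = n"
  unfolding degx_def dln_def by simp
lemma degx_dln_r: "degx (dln (Inr k) n) = 0"
  unfolding degx_def dln_def by simp
lemma dega_dln_l: "dega (dln (Inl i) n) = 0"
  unfolding dega_def dln_def by simp
lemma dega_dln_r: "dega (dln (Inr k) n) = n"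
  unfolding dega_def dln_def by simp
lemma deg_zero: "degx (\<lambda>_. 0) = 0" "dega (\<lambda>_. 0) = 0"
  unfolding degx_def dega_def by simp_all

lemma bounded_ex_finite: "finite {e :: ex. \<forall>v. e v \<le> n}"
proof -
  have "{e :: ex. \<forall>v. e v \<le> n} = Pi UNIV (\<lambda>_. {..n})" by auto
  also have "\<dots> = PiE UNIV (\<lambda>_. {..n})" by (simp add: PiE_UNIV_domain)
  finally show ?thesis by (simp add: finite_PiE)
qed

lemma ex_le_deg: "e v \<le> degx e + dega e"
proof (cases v)
  case (Inl i)
  have "e (Inl i) \<le> degx e" unfolding degx_def by (rule member_le_sum) auto
  then show ?thesis using Inl by simp
next
  case (Inr k)
  have "e (Inr k) \<le> dega e" unfolding dega_def by (rule member_le_sum) auto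
  then show ?thesis using Inr by simp
qed

lemma finite_Mons: "finite (Mons d1 d2)"
proof (rule finite_subset[OF _ bounded_ex_finite[of "d1 + d2"]])
  show "Mons d1 d2 \<subseteq> {e. \<forall>v. e v \<le> d1 + d2}"
  proof (intro subsetI CollectI allI)
    fix e v assume "e \<in> Mons d1 d2"
    then have "degx e + dega e = d1 + d2" unfolding Mons_def by simp
    then show "e v \<le> d1 + d2" using ex_le_deg[of e v] by simp
  qed
qed

section \<open>The equations of the singular locus\<close>

definition Xv :: "(vr \<Rightarrow> complex) \<Rightarrow> complex^8" where "Xv z = (\<chi> i. z (Inl i))"

definition Eval :: "quad_triple \<Rightarrow> 3 + 8 \<Rightarrow> (vr \<Rightarrow> complex) \<Rightarrow> complex" where
  "Eval d e z = (case e of Inl k \<Rightarrow> quad d k (Xv z)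
      | Inr l \<Rightarrow> (\<Sum>k\<in>UNIV. z (Inr k) * quad_grad d k (Xv z) $ l))"

definition edeg :: "3 + 8 \<Rightarrow> nat \<times> nat" where
  "edeg e = (case e of Inl _ \<Rightarrow> (2,0) | Inr _ \<Rightarrow> (1,1))"

definition ecoef :: "quad_triple \<Rightarrow> 3 + 8 \<Rightarrow> ex \<Rightarrow> complex" where
  "ecoef d e s = (case e of
      Inl k \<Rightarrow> (\<Sum>i\<in>UNIV. \<Sum>j\<in>UNIV. if s = eadd (dln (Inl i) 1) (dln (Inl j) 1) then coef d k i j else 0)
    | Inr l \<Rightarrow> (\<Sum>k\<in>UNIV. \<Sum>j\<in>UNIV. if s = eadd (dln (Inl j) 1) (dln (Inr k) 1)
                  then coef d k l j + coef d k j l else 0))"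

lemma Eval_exp:
  "Eval d e z = (\<Sum>s\<in>Mons (fst (edeg e)) (snd (edeg e)). ecoef d e s * mnm s z)"
proof (cases e)
  case (Inl k)
  have mem: "eadd (dln (Inl i) 1) (dln (Inl j) 1) \<in> Mons 2 0" for i j
    by (simp add: Mons_def degx_add dega_add degx_dln_l dega_dln_l)
  have "(\<Sum>s\<in>Mons 2 0. ecoef d e s * mnm s z)
     = (\<Sum>s\<in>Mons 2 0. \<Sum>i\<in>UNIV. \<Sum>j\<in>UNIV.
          (if s = eadd (dln (Inl i) 1) (dln (Inl j) 1) then coef d k i j * mnm s z else 0))"
    using Inl unfolding ecoef_def by (auto simp: sum_distrib_right intro!: sum.cong)
  also have "\<dots> = (\<Sum>i\<in>UNIV. \<Sum>j\<in>UNIV. \<Sum>s\<in>Mons 2 0.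
          (if s = eadd (dln (Inl i) 1) (dln (Inl j) 1) then coef d k i j * mnm s z else 0))"
    by (subst sum.swap, subst (2) sum.swap, rule refl)
  also have "\<dots> = (\<Sum>i\<in>UNIV. \<Sum>j\<in>UNIV. coef d k i j * (z (Inl i) * z (Inl j)))"
    by (simp add: sum.delta[OF finite_Mons] mem[simplified] mnm_add mnm_dln)
  also have "\<dots> = quad d k (Xv z)"
    unfolding quad_def Xv_def by (simp add: mult_ac)
  finally show ?thesis using Inl by (simp add: Eval_def edeg_def)
next
  case (Inr l)
  have mem: "eadd (dln (Inl j) 1) (dln (Inr k) 1) \<in> Mons 1 1" for j k
    by (simp add: Mons_def degx_add dega_add degx_dln_l dega_dln_l degx_dln_r dega_dln_r)
  have "(\<Sum>s\<in>Mons 1 1. ecoef d e s * mnm s z)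
     = (\<Sum>s\<in>Mons 1 1. \<Sum>k\<in>UNIV. \<Sum>j\<in>UNIV.
          (if s = eadd (dln (Inl j) 1) (dln (Inr k) 1) then (coef d k l j + coef d k j l) * mnm s z else 0))"
    using Inr unfolding ecoef_def by (auto simp: sum_distrib_right intro!: sum.cong)
  also have "\<dots> = (\<Sum>k\<in>UNIV. \<Sum>j\<in>UNIV. \<Sum>s\<in>Mons 1 1.
          (if s = eadd (dln (Inl j) 1) (dln (Inr k) 1) then (coef d k l j + coef d k j l) * mnm s z else 0))"
    by (subst sum.swap, subst (2) sum.swap, rule refl)
  also have "\<dots> = (\<Sum>k\<in>UNIV. \<Sum>j\<in>UNIV. (coef d k l j + coef d k j l) * (z (Inl j) * z (Inr k)))"
    by (simp add: sum.delta[OF finite_Mons] mem[simplified] mnm_add mnm_dln)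
  also have "\<dots> = (\<Sum>k\<in>UNIV. z (Inr k) * quad_grad d k (Xv z) $ l)"
    unfolding quad_grad_def Xv_def
    by (simp add: sum_distrib_left algebra_simps sum.distrib)
  finally show ?thesis using Inr by (simp add: Eval_def edeg_def)
qed

definition Cols :: "nat \<Rightarrow> nat \<Rightarrow> (ex \<times> (3 + 8)) set" where
  "Cols D1 D2 = {(t,e). degx t + fst (edeg e) = D1 \<and> dega t + snd (edeg e) = D2}"

lemma finite_Cols: "finite (Cols D1 D2)"
proof -
  have "Cols D1 D2 \<subseteq> {e :: ex. \<forall>v. e v \<le> D1 + D2} \<times> UNIV"
  proof
    fix c assume c: "c \<in> Cols D1 D2"
    obtain t e where ce: "c = (t,e)" by (cases c)
    have "degx t \<le> D1" "dega t \<le> D2" using c ce unfolding Cols_def by auto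
    then have "\<forall>v. t v \<le> D1 + D2" using ex_le_deg[of t] by (meson add_mono order_trans)
    then show "c \<in> {e :: ex. \<forall>v. e v \<le> D1 + D2} \<times> UNIV" using ce by simp
  qed
  then show ?thesis
    by (rule finite_subset) (simp add: bounded_ex_finite)
qed

definition colF :: "quad_triple \<Rightarrow> ex \<times> (3 + 8) \<Rightarrow> (vr \<Rightarrow> complex) \<Rightarrow> complex" where
  "colF d c z = mnm (fst c) z * Eval d (snd c) z"

definition Ment :: "quad_triple \<Rightarrow> ex \<Rightarrow> ex \<times> (3 + 8) \<Rightarrow> complex" where
  "Ment d r c = (\<Sum>s\<in>Mons (fst (edeg (snd c))) (snd (edeg (snd c))).
      if eadd (fst c) s = r then ecoef d (snd c) s else 0)"

lemma colF_exp:
  assumes c: "c \<in> Cols D1 D2"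
  shows "colF d c z = (\<Sum>r\<in>Mons D1 D2. Ment d r c * mnm r z)"
proof -
  obtain t e where ce: "c = (t,e)" by (cases c)
  let ?S = "Mons (fst (edeg e)) (snd (edeg e))"
  have mem: "s \<in> ?S \<Longrightarrow> eadd t s \<in> Mons D1 D2" for s
    using c ce by (auto simp: Mons_def Cols_def degx_add dega_add)
  have "(\<Sum>r\<in>Mons D1 D2. Ment d r c * mnm r z)
     = (\<Sum>r\<in>Mons D1 D2. \<Sum>s\<in>?S. if eadd t s = r then ecoef d e s * mnm r z else 0)"
    unfolding Ment_def ce by (auto simp: sum_distrib_right intro!: sum.cong)
  also have "\<dots> = (\<Sum>s\<in>?S. \<Sum>r\<in>Mons D1 D2. if eadd t s = r then ecoef d e s * mnm r z else 0)"
    by (rule sum.swap)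
  also have "\<dots> = (\<Sum>s\<in>?S. ecoef d e s * mnm (eadd t s) z)"
    by (intro sum.cong refl) (simp add: sum.delta'[OF finite_Mons] mem)
  also have "\<dots> = mnm t z * (\<Sum>s\<in>?S. ecoef d e s * mnm s z)"
    by (simp add: mnm_add sum_distrib_left mult_ac)
  also have "\<dots> = colF d c z"
    by (simp add: colF_def ce Eval_exp)
  finally show ?thesis by simp
qed

section \<open>The certificate matrix in bidegree (33,1)\<close>

definition rl :: "ex list" where "rl = (SOME xs. set xs = Mons 33 1 \<and> distinct xs)"
definition cl :: "(ex \<times> (3 + 8)) list" where "cl = (SOME xs. set xs = Cols 33 1 \<and> distinct xs)"

lemma rl: "set rl = Mons 33 1" "distinct rl"
  using someI_ex[OF finite_distinct_list[OF finite_Mons[of 33 1]]] unfolding rl_def by auto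
lemma cl: "set cl = Cols 33 1" "distinct cl"
  using someI_ex[OF finite_distinct_list[OF finite_Cols[of 33 1]]] unfolding cl_def by auto

lemma sum_rl: "(\<Sum>r\<in>Mons 33 1. f r) = (\<Sum>i\<in>{0..<length rl}. f (rl!i))"
proof -
  have "bij_betw ((!) rl) {..<length rl} (Mons 33 1)"
    by (rule bij_betw_nth) (use rl in auto)
  then show ?thesis
    by (simp add: sum.reindex_bij_betw[symmetric] atLeast0LessThan)
qed

lemma sum_cl: "(\<Sum>c\<in>Cols 33 1. f c) = (\<Sum>j\<in>{0..<length cl}. f (cl!j))"
proof -
  have "bij_betw ((!) cl) {..<length cl} (Cols 33 1)"
    by (rule bij_betw_nth) (use cl in auto)
  then show ?thesis
    by (simp add: sum.reindex_bij_betw[symmetric] atLeast0LessThan)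
qed

definition Amat :: "quad_triple \<Rightarrow> complex mat" where
  "Amat d = mat (length rl) (length cl) (\<lambda>(i,j). Ment d (rl!i) (cl!j))"
definition Bmat :: "quad_triple \<Rightarrow> complex mat" where
  "Bmat d = mat (length cl) (length rl) (\<lambda>(j,i). cnj (Ment d (rl!i) (cl!j)))"
definition Gf :: "quad_triple \<Rightarrow> quad_triple \<Rightarrow> complex" where
  "Gf d' d = det (Amat d * Bmat d')"

lemma Amat_carrier: "Amat d \<in> carrier_mat (length rl) (length cl)"
  unfolding Amat_def by simp
lemma Bmat_carrier: "Bmat d \<in> carrier_mat (length cl) (length rl)"
  unfolding Bmat_def by simp

lemma mult_entry:
  assumes "A \<in> carrier_mat n m" "B \<in> carrier_mat m p" "i < n" "j < p"
  shows "(A * B) $$ (i,j) = (\<Sum>k\<in>{0..<m}. A $$ (i,k) * B $$ (k,j))"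
  using assms by (simp add: scalar_prod_def)

lemma generic:
  assumes G: "Gf d' d \<noteq> 0"
  shows "smooth_intersection d"
  unfolding smooth_intersection_def
proof (intro allI impI)
  fix x :: "complex^8" and a :: "3 \<Rightarrow> complex" and l0 :: 3
  assume x: "x \<noteq> 0 \<and> (\<forall>k. quad d k x = 0)" and s: "(\<Sum>k\<in>UNIV. a k *s quad_grad d k x) = 0"
  let ?n = "length rl" and ?m = "length cl"
  let ?A = "Amat d" and ?B = "Bmat d'"
  let ?N = "?A * ?B"
  have N: "?N \<in> carrier_mat ?n ?n" using Amat_carrier Bmat_carrier by (rule mult_carrier_mat)
  define M where "M = ?B * adj_mat ?N"
  have Mc: "M \<in> carrier_mat ?m ?n" unfolding M_def
    using Bmat_carrier adj_mat(1)[OF N] by (rule mult_carrier_mat)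
  have AM: "?A * M = det ?N \<cdot>\<^sub>m 1\<^sub>m ?n"
    unfolding M_def using Amat_carrier Bmat_carrier adj_mat[OF N]
    by (simp add: assoc_mult_mat[symmetric, of _ ?n ?m _ ?n _ ?n])
  have entry: "(\<Sum>j\<in>{0..<?m}. Ment d (rl!i) (cl!j) * M $$ (j,\<iota>)) = (if i = \<iota> then det ?N else 0)"
    if "i < ?n" "\<iota> < ?n" for i \<iota>
  proof -
    have "(?A * M) $$ (i,\<iota>) = (\<Sum>j\<in>{0..<?m}. ?A $$ (i,j) * M $$ (j,\<iota>))"
      by (rule mult_entry[OF Amat_carrier Mc that])
    also have "\<dots> = (\<Sum>j\<in>{0..<?m}. Ment d (rl!i) (cl!j) * M $$ (j,\<iota>))"
      using that by (intro sum.cong refl) (simp add: Amat_def)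
    finally have 1: "(?A * M) $$ (i,\<iota>) = (\<Sum>j\<in>{0..<?m}. Ment d (rl!i) (cl!j) * M $$ (j,\<iota>))" .
    have "(?A * M) $$ (i,\<iota>) = (if i = \<iota> then det ?N else 0)"
      unfolding AM using that by simp
    then show ?thesis using 1 by simp
  qed
  define z where "z = (\<lambda>v::vr. case v of Inl i \<Rightarrow> x $ i | Inr k \<Rightarrow> a k)"
  have Xz: "Xv z = x" by (simp add: Xv_def z_def vec_eq_iff)
  have Ev: "Eval d e z = 0" for e
  proof (cases e)
    case (Inl k) then show ?thesis using x by (simp add: Eval_def Xz)
  next
    case (Inr l)
    have "(\<Sum>k\<in>UNIV. a k * quad_grad d k x $ l) = (\<Sum>k\<in>UNIV. a k *s quad_grad d k x) $ l"
      by (simp add: sum_component)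
    moreover have "z (Inr k) = a k" for k by (simp add: z_def)
    ultimately show ?thesis using Inr s by (simp add: Eval_def Xz)
  qed
  have key: "det ?N * mnm (rl!\<iota>) z = 0" if "\<iota> < ?n" for \<iota>
  proof -
    have "(\<Sum>j\<in>{0..<?m}. M $$ (j,\<iota>) * colF d (cl!j) z) = 0"
      by (simp add: colF_def Ev)
    moreover have "(\<Sum>j\<in>{0..<?m}. M $$ (j,\<iota>) * colF d (cl!j) z)
       = (\<Sum>j\<in>{0..<?m}. \<Sum>r\<in>Mons 33 1. M $$ (j,\<iota>) * (Ment d r (cl!j) * mnm r z))"
    proof (intro sum.cong refl)
      fix j assume "j \<in> {0..<?m}"
      then have "cl!j \<in> Cols 33 1" using cl by (metis atLeastLessThan_iff nth_mem)
      then show "M $$ (j,\<iota>) * colF d (cl!j) z = (\<Sum>r\<in>Mons 33 1. M $$ (j,\<iota>) * (Ment d r (cl!j) * mnm r z))"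
        by (simp add: colF_exp sum_distrib_left)
    qed
    moreover have "\<dots> = (\<Sum>r\<in>Mons 33 1. (\<Sum>j\<in>{0..<?m}. Ment d r (cl!j) * M $$ (j,\<iota>)) * mnm r z)"
      by (subst sum.swap) (simp add: sum_distrib_left sum_distrib_right mult_ac)
    moreover have "\<dots> = (\<Sum>i\<in>{0..<?n}. (\<Sum>j\<in>{0..<?m}. Ment d (rl!i) (cl!j) * M $$ (j,\<iota>)) * mnm (rl!i) z)"
      by (rule sum_rl)
    moreover have "\<dots> = (\<Sum>i\<in>{0..<?n}. (if i = \<iota> then det ?N * mnm (rl!i) z else 0))"
      using that by (intro sum.cong refl) (simp add: entry)
    moreover have "\<dots> = det ?N * mnm (rl!\<iota>) z"
      using that by (simp add: sum.delta')
    ultimately show ?thesis by simp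
  qed
  show "a l0 = 0"
  proof (rule ccontr)
    assume al: "a l0 \<noteq> 0"
    have "\<exists>i. x $ i \<noteq> 0"
    proof (rule ccontr)
      assume "\<not> (\<exists>i. x $ i \<noteq> 0)"
      then have "x = 0" unfolding Finite_Cartesian_Product.vec_eq_iff by simp
      then show False using x by simp
    qed
    then obtain i0 where xi: "x $ i0 \<noteq> 0" by blast
    define r0 where "r0 = eadd (dln (Inl i0) 33) (dln (Inr l0) 1)"
    have "r0 \<in> Mons 33 1"
      by (simp add: r0_def Mons_def degx_add dega_add degx_dln_l dega_dln_l degx_dln_r dega_dln_r)
    then obtain \<iota> where \<iota>: "\<iota> < ?n" "rl!\<iota> = r0" using rl by (metis in_set_conv_nth)
    have "mnm r0 z = x $ i0 ^ 33 * a l0"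
      by (simp add: r0_def mnm_add mnm_dln z_def)
    then have "mnm r0 z \<noteq> 0" using xi al by simp
    moreover have "det ?N \<noteq> 0" using G unfolding Gf_def .
    ultimately show False using key[OF \<iota>(1)] \<iota>(2) by simp
  qed
qed

lemma pf_ecoef: "(\<lambda>d. ecoef d e s) \<in> poly_fun"
  unfolding ecoef_def
  by (cases e) (auto intro!: pf_sum pf_if pf_coef poly_fun.const pf_add)

lemma pf_Ment: "(\<lambda>d. Ment d r c) \<in> poly_fun"
  unfolding Ment_def
  by (auto intro!: pf_sum pf_if pf_ecoef poly_fun.const finite_Mons)

lemma pf_Gf: "(\<lambda>d. Gf d' d) \<in> poly_fun"
proof -
  let ?n = "length rl" and ?m = "length cl"
  have entry: "(\<lambda>d. (Amat d * Bmat d') $$ (i,j)) \<in> poly_fun" if "i < ?n" "j < ?n" for i j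
  proof -
    have "(\<lambda>d. \<Sum>k\<in>{0..<?m}. Ment d (rl!i) (cl!k) * Bmat d' $$ (k,j)) \<in> poly_fun"
      by (auto intro!: pf_sum pf_mult pf_Ment poly_fun.const)
    moreover have "(Amat d * Bmat d') $$ (i,j) = (\<Sum>k\<in>{0..<?m}. Ment d (rl!i) (cl!k) * Bmat d' $$ (k,j))" for d
      using that by (subst mult_entry[OF Amat_carrier Bmat_carrier]) (simp_all add: Amat_def)
    ultimately show ?thesis by simp
  qed
  have eq: "Gf d' d = (\<Sum>p\<in>{p. p permutes {0..<?n}}. of_int (signof p) * (\<Prod>i\<in>{0..<?n}. (Amat d * Bmat d') $$ (i, p i)))" for d
    unfolding Gf_def
    by (subst det_def'[OF mult_carrier_mat[OF Amat_carrier Bmat_carrier]]) simp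
  have "(\<lambda>d. \<Sum>p\<in>{p. p permutes {0..<?n}}. of_int (signof p) * (\<Prod>i\<in>{0..<?n}. (Amat d * Bmat d') $$ (i, p i))) \<in> poly_fun"
  proof (intro pf_sum pf_mult poly_fun.const pf_prod)
    show "finite {p. p permutes {0..<?n}}" by (simp add: finite_permutations)
  next
    fix p i assume p: "p \<in> {p. p permutes {0..<?n}}" and i: "i \<in> {0..<?n}"
    then have "p i < ?n" by (simp add: permutes_in_image)
    then show "(\<lambda>d. (Amat d * Bmat d') $$ (i, p i)) \<in> poly_fun" using i by (intro entry) auto
  qed simp
  then show ?thesis by (simp add: eq)
qed

lemma Gf_coef:
  assumes "\<And>k i j. coef d1 k i j = coef d2 k i j"
  shows "Gf d' d1 = Gf d' d2"
proof -
  have cc: "coef d1 = coef d2" by (intro ext) (rule assms)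
  have ec: "ecoef d1 = ecoef d2" unfolding ecoef_def cc by (rule refl)
  have "Ment d1 = Ment d2" unfolding Ment_def ec by (rule refl)
  then show ?thesis unfolding Gf_def Amat_def by simp
qed

section \<open>The diagonal witness\<close>

lemma exhaust_8: fixes x :: 8 shows "x = 0 \<or> x = 1 \<or> x = 2 \<or> x = 3 \<or> x = 4 \<or> x = 5 \<or> x = 6 \<or> x = 7"
proof (induct x)
  case (of_int z)
  then have "z = 0 \<or> z = 1 \<or> z = 2 \<or> z = 3 \<or> z = 4 \<or> z = 5 \<or> z = 6 \<or> z = 7" by fastforce
  then show ?case by auto
qed

definition rw :: "3 \<Rightarrow> 8 \<Rightarrow> int" where
 "rw k i = (if k = 1 then
    (if i = 0 then -10 else if i = 1 then 10 else if i = 2 then 5 else if i = 3 then -5 else if i = 4 then -1 else if i = 5 then 1 else 0)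
   else if k = 2 then
    (if i = 0 then -10 else if i = 1 then 5 else if i = 2 then 10 else if i = 3 then -1 else if i = 4 then -5 else if i = 5 then 0 else if i = 6 then 1 else 0)
   else
    (if i = 0 then -6 else if i = 1 then 4 else if i = 2 then 4 else if i = 3 then -1 else if i = 4 then -1 else if i = 5 then 0 else if i = 6 then 0 else 24))"

definition lam :: "3 \<Rightarrow> 8 \<Rightarrow> complex" where "lam k i = of_int (rw k i)"

definition LM :: "8 \<Rightarrow> 8 \<Rightarrow> 8 \<Rightarrow> complex^3^3" where
  "LM i j m = (\<chi> k s. lam k (if s = 1 then i else if s = 2 then j else m))"

definition d3 :: "8 \<Rightarrow> 8 \<Rightarrow> 8 \<Rightarrow> int" where
  "d3 i j m = rw 1 i * rw 2 j * rw 3 m - rw 1 i * rw 3 j * rw 2 m - rw 2 i * rw 1 j * rw 3 m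
      + rw 2 i * rw 3 j * rw 1 m + rw 3 i * rw 1 j * rw 2 m - rw 3 i * rw 2 j * rw 1 m"

lemma d3_nz: "i \<noteq> j \<Longrightarrow> i \<noteq> m \<Longrightarrow> j \<noteq> m \<Longrightarrow> d3 i j m \<noteq> 0"
  using exhaust_8[of i] exhaust_8[of j] exhaust_8[of m]
  by (elim disjE) (simp_all add: d3_def rw_def)

lemma det_LM: "Determinants.det (LM i j m) = of_int (d3 i j m)"
  by (simp add: det_3 LM_def lam_def d3_def algebra_simps)

lemma LM_inv:
  assumes "i \<noteq> j" "i \<noteq> m" "j \<noteq> m"
  shows "invertible (LM i j m)"
  using d3_nz[OF assms] by (simp add: invertible_det_nz det_LM)

lemma solvA:
  assumes "i \<noteq> j" "i \<noteq> m" "j \<noteq> m"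
  shows "\<exists>b1 b2 b3. \<forall>k. b1 * lam k i + b2 * lam k j + b3 * lam k m = (if k = l then 1 else 0)"
proof -
  obtain B where B: "LM i j m ** B = Finite_Cartesian_Product.mat 1"
    using LM_inv[OF assms] unfolding invertible_def by blast
  have "\<forall>k. B$1$l * lam k i + B$2$l * lam k j + B$3$l * lam k m = (if k = l then 1 else 0)"
  proof
    fix k
    have "(LM i j m ** B)$k$l = (if k = l then 1 else 0)" using B by (simp add: Finite_Cartesian_Product.mat_def)
    then show "B$1$l * lam k i + B$2$l * lam k j + B$3$l * lam k m = (if k = l then 1 else 0)"
      by (simp add: matrix_matrix_mult_def sum_3 LM_def mult_ac)
  qed
  then show ?thesis by blast
qed

lemma solvB:
  assumes "i \<noteq> j" "i \<noteq> m" "j \<noteq> m"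
  shows "\<exists>b. (\<Sum>k\<in>UNIV. b k * lam k i) = 1 \<and> (\<Sum>k\<in>UNIV. b k * lam k j) = 0 \<and> (\<Sum>k\<in>UNIV. b k * lam k m) = 0"
proof -
  obtain B where B: "B ** LM i j m = Finite_Cartesian_Product.mat 1"
    using LM_inv[OF assms] unfolding invertible_def by blast
  have e: "(B ** LM i j m)$1$s = (if 1 = s then 1 else 0)" for s using B by (simp add: Finite_Cartesian_Product.mat_def)
  have "(\<Sum>k\<in>UNIV. B$1$k * lam k i) = 1" using e[of 1] by (simp add: matrix_matrix_mult_def LM_def)
  moreover have "(\<Sum>k\<in>UNIV. B$1$k * lam k j) = 0" using e[of 2] by (simp add: matrix_matrix_mult_def LM_def)
  moreover have "(\<Sum>k\<in>UNIV. B$1$k * lam k m) = 0" using e[of 3] by (simp add: matrix_matrix_mult_def LM_def)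
  ultimately show ?thesis by blast
qed

definition d0 :: quad_triple where "d0 = (\<lambda>(k,i,j). if i = j then lam k i else 0)"

lemma coef_d0: "coef d0 k i j = (if i = j then lam k i else 0)"
  unfolding coef_def d0_def by auto

lemma quad_d0: "quad d0 k x = (\<Sum>i\<in>UNIV. lam k i * x $ i ^ 2)"
proof -
  have "coef d0 k i j * x$i * x$j = (if j = i then lam k i * x$i ^ 2 else 0)" for i j
    by (auto simp: coef_d0 power2_eq_square)
  then show ?thesis unfolding quad_def by simp
qed

lemma grad_d0: "quad_grad d0 k x $ l = 2 * lam k l * x $ l"
proof -
  have a: "coef d0 k l j * x$j = (if j = l then lam k l * x$l else 0)" for j
    by (auto simp: coef_d0)
  have b: "coef d0 k i l * x$i = (if i = l then lam k l * x$l else 0)" for i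
    by (auto simp: coef_d0)
  show ?thesis unfolding quad_grad_def by (simp add: a b)
qed

lemma Eval_d0_q: "Eval d0 (Inl k) z = (\<Sum>i\<in>UNIV. lam k i * z (Inl i) ^ 2)"
  by (simp add: Eval_def quad_d0 Xv_def)

lemma Eval_d0_g: "Eval d0 (Inr l) z = 2 * (\<Sum>k\<in>UNIV. z (Inr k) * lam k l) * z (Inl l)"
  by (simp add: Eval_def grad_d0 Xv_def sum_distrib_left sum_distrib_right mult_ac)

lemma sum_delta_mult: "(\<Sum>k\<in>UNIV. f k * (if k = l then 1 else 0)) = (f (l::3) :: complex)"
proof -
  have e: "(\<lambda>k. f k * (if k = l then 1 else 0)) = (\<lambda>k. if k = l then f k else 0)" by auto
  show ?thesis by (subst e) simp
qed

section \<open>Ideal membership at the witness\<close>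

inductive InI :: "nat \<Rightarrow> nat \<Rightarrow> ((vr \<Rightarrow> complex) \<Rightarrow> complex) \<Rightarrow> bool" where
  base: "InI (fst (edeg e)) (snd (edeg e)) (Eval d0 e)"
| zero: "InI D1 D2 (\<lambda>_. 0)"
| add: "InI D1 D2 f \<Longrightarrow> InI D1 D2 g \<Longrightarrow> InI D1 D2 (\<lambda>z. f z + g z)"
| smul: "InI D1 D2 f \<Longrightarrow> InI D1 D2 (\<lambda>z. c * f z)"
| mulmon: "InI D1 D2 f \<Longrightarrow> InI (D1 + degx t) (D2 + dega t) (\<lambda>z. mnm t z * f z)"

lemma InI_eq: "InI D1 D2 f \<Longrightarrow> D1 = D1' \<Longrightarrow> D2 = D2' \<Longrightarrow> (\<And>z. f z = g z) \<Longrightarrow> InI D1' D2' g"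
proof -
  assume "InI D1 D2 f" "D1 = D1'" "D2 = D2'" "\<And>z. f z = g z"
  moreover have "f = g" using \<open>\<And>z. f z = g z\<close> by (rule ext)
  ultimately show ?thesis by simp
qed

lemma InI_mulx: "InI D1 D2 f \<Longrightarrow> InI (Suc D1) D2 (\<lambda>z. z (Inl i) * f z)"
  by (rule InI_eq[OF InI.mulmon[of D1 D2 f "dln (Inl i) 1"]])
     (simp_all add: degx_dln_l dega_dln_l mnm_dln)

lemma InI_mula: "InI D1 D2 f \<Longrightarrow> InI D1 (Suc D2) (\<lambda>z. z (Inr k) * f z)"
  by (rule InI_eq[OF InI.mulmon[of D1 D2 f "dln (Inr k) 1"]])
     (simp_all add: degx_dln_r dega_dln_r mnm_dln)

lemma InI_diff: "InI D1 D2 f \<Longrightarrow> InI D1 D2 g \<Longrightarrow> InI D1 D2 (\<lambda>z. f z - g z)"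
  by (rule InI_eq[OF InI.add[OF _ InI.smul[of _ _ g "-1"]]]) auto

lemma InI_sum:
  assumes "finite A" "\<And>a. a \<in> A \<Longrightarrow> InI D1 D2 (f a)"
  shows "InI D1 D2 (\<lambda>z. \<Sum>a\<in>A. f a z)"
  using assms
proof (induction A rule: finite_induct)
  case empty then show ?case using InI.zero by simp
next
  case (insert x F)
  have "InI D1 D2 (\<lambda>z. f x z + (\<Sum>a\<in>F. f a z))"
    by (rule InI.add) (use insert in auto)
  then show ?case using insert by simp
qed

lemma InI_q: "InI 2 0 (\<lambda>z. \<Sum>i\<in>UNIV. lam k i * z (Inl i) ^ 2)"
  by (rule InI_eq[OF InI.base[of "Inl k"]]) (simp_all add: edeg_def Eval_d0_q)

lemma InI_g: "InI 1 1 (\<lambda>z. (\<Sum>k\<in>UNIV. z (Inr k) * lam k l) * z (Inl l))"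
  by (rule InI_eq[OF InI.smul[OF InI.base[of "Inr l"], of "1/2"]]) (simp_all add: edeg_def Eval_d0_g)

lemma InI_T3:
  assumes "i \<noteq> j" "i \<noteq> m" "j \<noteq> m"
  shows "InI 3 1 (\<lambda>z. z (Inl i) * z (Inl j) * z (Inl m) * z (Inr l))"
proof -
  obtain b1 b2 b3 where b: "\<And>k. b1 * lam k i + b2 * lam k j + b3 * lam k m = (if k = l then 1 else 0)"
    using solvA[OF assms, of l] by blast
  let ?mu = "\<lambda>p z. \<Sum>k\<in>UNIV. z (Inr k) * lam k p"
  have mu: "b1 * ?mu i z + b2 * ?mu j z + b3 * ?mu m z = z (Inr l)" for z
  proof -
    have "b1 * ?mu i z + b2 * ?mu j z + b3 * ?mu m z = (\<Sum>k\<in>UNIV. z (Inr k) * (b1 * lam k i + b2 * lam k j + b3 * lam k m))"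
      by (simp add: sum_distrib_left sum.distrib algebra_simps)
    also have "\<dots> = z (Inr l)" by (simp only: b sum_delta_mult)
    finally show ?thesis .
  qed
  have g3: "InI 3 1 (\<lambda>z. z (Inl q2) * (z (Inl q3) * (?mu p z * z (Inl p))))" for p q2 q3
    using InI_mulx[OF InI_mulx[OF InI_g[of p]]] by (simp add: numeral_eq_Suc)
  have "InI 3 1 (\<lambda>z. b1 * (z (Inl j) * (z (Inl m) * (?mu i z * z (Inl i))))
     + b2 * (z (Inl i) * (z (Inl m) * (?mu j z * z (Inl j))))
     + b3 * (z (Inl i) * (z (Inl j) * (?mu m z * z (Inl m)))))"
    by (intro InI.add InI.smul g3)
  then show ?thesis
  proof (rule InI_eq)
    fix z
    have "z (Inl i) * z (Inl j) * z (Inl m) * z (Inr l)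
        = z (Inl i) * z (Inl j) * z (Inl m) * (b1 * ?mu i z + b2 * ?mu j z + b3 * ?mu m z)"
      by (simp add: mu)
    then show "b1 * (z (Inl j) * (z (Inl m) * (?mu i z * z (Inl i))))
     + b2 * (z (Inl i) * (z (Inl m) * (?mu j z * z (Inl j))))
     + b3 * (z (Inl i) * (z (Inl j) * (?mu m z * z (Inl m))))
       = z (Inl i) * z (Inl j) * z (Inl m) * z (Inr l)"
      by (simp add: algebra_simps)
  qed simp_all
qed

lemma InI_L1:
  assumes "i \<noteq> m" "i \<noteq> n" "m \<noteq> n"
  shows "InI 5 1 (\<lambda>z. z (Inl i) * z (Inl m) ^ 2 * z (Inl n) ^ 2 * z (Inr l))"
  using InI_mulx[OF InI_mulx[OF InI_T3[OF assms, of l]], of m n]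
  by (rule InI_eq) (simp_all add: power2_eq_square mult_ac)

lemma ex_other: "\<exists>r::8. r \<noteq> i \<and> r \<noteq> m"
proof -
  have "(0::8) \<noteq> i \<and> 0 \<noteq> m \<or> (1::8) \<noteq> i \<and> 1 \<noteq> m \<or> (2::8) \<noteq> i \<and> 2 \<noteq> m"
    by auto
  then show ?thesis by blast
qed

lemma quad_comb:
  "(\<Sum>k\<in>UNIV. b k * (\<Sum>n\<in>UNIV. lam k n * z (Inl n) ^ 2))
    = (\<Sum>n\<in>UNIV. (\<Sum>k\<in>UNIV. b k * lam k n) * z (Inl n) ^ 2)"
  by (simp add: sum_distrib_left sum_distrib_right mult_ac) (rule sum.swap)

lemma InI_Q: "InI 2 0 (\<lambda>z. \<Sum>k\<in>UNIV. b k * (\<Sum>n\<in>UNIV. lam k n * z (Inl n) ^ 2))"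
  by (intro InI_sum InI.smul InI_q) simp

lemma split_i:
  fixes c :: "8 \<Rightarrow> complex"
  assumes "c i = 1"
  shows "(\<Sum>n\<in>UNIV. c n * y n) = y i + (\<Sum>n\<in>UNIV - {i}. c n * y n)"
  using assms by (simp add: sum.remove[of UNIV i])

lemma InI_L2:
  assumes im: "i \<noteq> m"
  shows "InI 5 1 (\<lambda>z. z (Inl i) ^ 3 * z (Inl m) ^ 2 * z (Inr l))"
proof -
  obtain r where r: "r \<noteq> i" "r \<noteq> m" using ex_other by blast
  obtain b where b: "(\<Sum>k\<in>UNIV. b k * lam k i) = 1" "(\<Sum>k\<in>UNIV. b k * lam k m) = 0"
    using solvB[of i m r] im r by metis
  define c where "c n = (\<Sum>k\<in>UNIV. b k * lam k n)" for n
  have ci: "c i = 1" and cm: "c m = 0" using b by (simp_all add: c_def)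
  let ?Q = "\<lambda>z. \<Sum>k\<in>UNIV. b k * (\<Sum>n\<in>UNIV. lam k n * z (Inl n) ^ 2)"
  have Q: "?Q z = z (Inl i) ^ 2 + (\<Sum>n\<in>UNIV - {i}. c n * z (Inl n) ^ 2)" for z
    unfolding quad_comb c_def[symmetric] by (rule split_i[of c i, OF ci])
  have A: "InI 5 1 (\<lambda>z. z (Inl i) * (z (Inl m) * (z (Inl m) * (z (Inr l) * ?Q z))))"
    using InI_mulx[OF InI_mulx[OF InI_mulx[OF InI_mula[OF InI_Q]]]] by (simp add: numeral_eq_Suc)
  have B: "InI 5 1 (\<lambda>z. \<Sum>n\<in>UNIV - {i}. c n * (z (Inl i) * z (Inl m) ^ 2 * z (Inl n) ^ 2 * z (Inr l)))"
  proof (rule InI_sum)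
    fix n assume n: "n \<in> UNIV - {i}"
    show "InI 5 1 (\<lambda>z. c n * (z (Inl i) * z (Inl m) ^ 2 * z (Inl n) ^ 2 * z (Inr l)))"
    proof (cases "n = m")
      case True
      then show ?thesis using cm by (simp add: InI.zero)
    next
      case False
      then show ?thesis using n im by (intro InI.smul InI_L1) auto
    qed
  qed simp
  show ?thesis
  proof (rule InI_eq[OF InI_diff[OF A B]])
    fix z
    show "z (Inl i) * (z (Inl m) * (z (Inl m) * (z (Inr l) * ?Q z)))
      - (\<Sum>n\<in>UNIV - {i}. c n * (z (Inl i) * z (Inl m) ^ 2 * z (Inl n) ^ 2 * z (Inr l)))
      = z (Inl i) ^ 3 * z (Inl m) ^ 2 * z (Inr l)"
      unfolding Q by (simp add: algebra_simps sum_distrib_left sum_distrib_right power2_eq_square power3_eq_cube)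
  qed simp_all
qed

lemma InI_L3: "InI 5 1 (\<lambda>z. z (Inl i) ^ 5 * z (Inr l))"
proof -
  obtain m where m: "m \<noteq> i" using ex_other by blast
  obtain r where r: "r \<noteq> i" "r \<noteq> m" using ex_other by blast
  obtain b where b: "(\<Sum>k\<in>UNIV. b k * lam k i) = 1"
    using solvB[of i m r] m r by metis
  define c where "c n = (\<Sum>k\<in>UNIV. b k * lam k n)" for n
  have ci: "c i = 1" using b by (simp_all add: c_def)
  let ?Q = "\<lambda>z. \<Sum>k\<in>UNIV. b k * (\<Sum>n\<in>UNIV. lam k n * z (Inl n) ^ 2)"
  have Q: "?Q z = z (Inl i) ^ 2 + (\<Sum>n\<in>UNIV - {i}. c n * z (Inl n) ^ 2)" for z
    unfolding quad_comb c_def[symmetric] by (rule split_i[of c i, OF ci])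
  have A: "InI 5 1 (\<lambda>z. z (Inl i) * (z (Inl i) * (z (Inl i) * (z (Inr l) * ?Q z))))"
    using InI_mulx[OF InI_mulx[OF InI_mulx[OF InI_mula[OF InI_Q]]]] by (simp add: numeral_eq_Suc)
  have B: "InI 5 1 (\<lambda>z. \<Sum>n\<in>UNIV - {i}. c n * (z (Inl i) ^ 3 * z (Inl n) ^ 2 * z (Inr l)))"
    by (intro InI_sum InI.smul InI_L2) auto
  show ?thesis
  proof (rule InI_eq[OF InI_diff[OF A B]])
    fix z
    show "z (Inl i) * (z (Inl i) * (z (Inl i) * (z (Inr l) * ?Q z)))
      - (\<Sum>n\<in>UNIV - {i}. c n * (z (Inl i) ^ 3 * z (Inl n) ^ 2 * z (Inr l)))
      = z (Inl i) ^ 5 * z (Inr l)"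
      unfolding Q by (simp add: algebra_simps sum_distrib_left sum_distrib_right power2_eq_square power3_eq_cube)
        (simp add: power_def)
  qed simp_all
qed

lemma InI_mon:
  assumes e: "e \<in> Mons 33 1"
  shows "InI 33 1 (mnm e)"
proof -
  have dx: "degx e = 33" and da: "dega e = 1" using e by (auto simp: Mons_def)
  have "\<exists>i. e (Inl i) \<ge> 5"
  proof (rule ccontr)
    assume nx: "\<not> (\<exists>i. e (Inl i) \<ge> 5)"
    have "\<forall>i. e (Inl i) \<le> 4"
    proof
      fix i have "\<not> 5 \<le> e (Inl i)" using nx by blast
      then show "e (Inl i) \<le> 4" by linarith
    qed
    then have "degx e \<le> of_nat (card (UNIV :: 8 set)) * 4"
      unfolding degx_def by (intro sum_bounded_above) auto
    then show False using dx by simp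
  qed
  then obtain i where i: "e (Inl i) \<ge> 5" by blast
  have "\<exists>l. e (Inr l) \<ge> 1"
  proof (rule ccontr)
    assume "\<not> (\<exists>l. e (Inr l) \<ge> 1)"
    then have "\<forall>k. e (Inr k) = 0" by (metis less_one not_less)
    then have "dega e = 0" unfolding dega_def by simp
    then show False using da by simp
  qed
  then obtain l where l: "e (Inr l) \<ge> 1" by blast
  define s where "s = eadd (dln (Inl i) 5) (dln (Inr l) 1)"
  define t where "t = (\<lambda>v. e v - s v)"
  have est: "e = eadd t s"
    unfolding t_def s_def eadd_def dln_def using i l by (auto intro!: ext)
  have ds: "degx s = 5" "dega s = 1"
    by (simp_all add: s_def degx_add dega_add degx_dln_l dega_dln_l degx_dln_r dega_dln_r)
  have dt: "degx t = 28" "dega t = 0" using dx da ds unfolding est degx_add dega_add by simp_all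
  have ms: "mnm s z = z (Inl i) ^ 5 * z (Inr l)" for z by (simp add: s_def mnm_add mnm_dln)
  show ?thesis
    using InI.mulmon[OF InI_L3[of i l], of t]
  proof (rule InI_eq)
    fix z show "mnm t z * (z (Inl i) ^ 5 * z (Inr l)) = mnm e z"
      by (subst est) (simp add: mnm_add ms)
  qed (simp_all add: dt)
qed

section \<open>Linear independence of monomials\<close>

lemma poly_indep1:
  assumes N: "finite N" and H: "\<And>t::complex. (\<Sum>n\<in>N. c n * t ^ n) = 0" and n: "n \<in> N"
  shows "c n = 0"
proof -
  define p where "p = (\<Sum>m\<in>N. monom (c m) m)"
  have "poly p t = 0" for t using H by (simp add: p_def poly_sum poly_monom)
  then have "p = 0" using poly_all_0_iff_0 by blast
  then have "coeff p n = 0" by simp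
  moreover have "coeff p n = c n"
    using N n by (simp add: p_def coeff_sum coeff_monom sum.delta)
  ultimately show ?thesis by simp
qed

lemma indep_gen:
  fixes V :: "'v set"
  assumes "finite V"
  shows "\<forall>S f. finite S \<longrightarrow> (\<forall>e\<in>S. \<forall>v. v \<notin> V \<longrightarrow> e v = (0::nat)) \<longrightarrow>
     (\<forall>z. (\<Sum>e\<in>S. f e * (\<Prod>v\<in>V. z v ^ e v)) = (0::complex)) \<longrightarrow> (\<forall>e\<in>S. f e = 0)"
  using assms
proof (induction V rule: finite_induct)
  case empty
  show ?case
  proof (intro allI impI ballI)
    fix S f e
    assume S: "finite S" and supp: "\<forall>e\<in>S. \<forall>v. v \<notin> ({}::'v set) \<longrightarrow> e v = (0::nat)"
      and H: "\<forall>z::'v\<Rightarrow>complex. (\<Sum>e\<in>S. f e * (\<Prod>v\<in>{}. z v ^ e v)) = 0" and e: "e \<in> S"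
    have "S = {e}"
    proof
      show "S \<subseteq> {e}"
      proof
        fix e' assume e': "e' \<in> S"
        have "e' x = 0" "e x = 0" for x using supp e' e by blast+
        then have "e' = e" by (simp add: fun_eq_iff)
        then show "e' \<in> {e}" by simp
      qed
    qed (use e in simp)
    then show "f e = 0" using H by simp
  qed
next
  case (insert w V)
  show ?case
  proof (intro allI impI ballI)
    fix S f e0
    assume S: "finite S" and supp: "\<forall>e\<in>S. \<forall>v. v \<notin> insert w V \<longrightarrow> e v = (0::nat)"
      and H: "\<forall>z::'v\<Rightarrow>complex. (\<Sum>e\<in>S. f e * (\<Prod>v\<in>insert w V. z v ^ e v)) = 0"
      and e0: "e0 \<in> S"
    define n0 where "n0 = e0 w"
    define S0 where "S0 = {e\<in>S. e w = n0}"
    have S0: "finite S0" "e0 \<in> S0" using S e0 by (auto simp: S0_def n0_def)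
    have A: "(\<Sum>e\<in>S0. f e * (\<Prod>v\<in>V. z v ^ e v)) = 0" for z
    proof -
      define g where "g n = (\<Sum>e\<in>{e\<in>S. e w = n}. f e * (\<Prod>v\<in>V. z v ^ e v))" for n
      have "(\<Sum>n\<in>(\<lambda>e. e w) ` S. g n * t ^ n) = 0" for t
      proof -
        have "0 = (\<Sum>e\<in>S. f e * (\<Prod>v\<in>insert w V. (z(w := t)) v ^ e v))" using H by simp
        also have "\<dots> = (\<Sum>e\<in>S. f e * (\<Prod>v\<in>V. z v ^ e v) * t ^ e w)"
        proof (intro sum.cong refl)
          fix e assume "e \<in> S"
          have "(\<Prod>v\<in>V. (z(w := t)) v ^ e v) = (\<Prod>v\<in>V. z v ^ e v)"
            using insert.hyps(2) by (intro prod.cong refl) auto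
          then show "f e * (\<Prod>v\<in>insert w V. (z(w := t)) v ^ e v) = f e * (\<Prod>v\<in>V. z v ^ e v) * t ^ e w"
            using insert.hyps by (simp add: mult_ac)
        qed
        also have "\<dots> = (\<Sum>n\<in>(\<lambda>e. e w) ` S. \<Sum>e\<in>{e\<in>S. e w = n}. f e * (\<Prod>v\<in>V. z v ^ e v) * t ^ e w)"
          by (rule sum.image_gen[OF S])
        also have "\<dots> = (\<Sum>n\<in>(\<lambda>e. e w) ` S. g n * t ^ n)"
          unfolding g_def by (intro sum.cong refl) (simp add: sum_distrib_right)
        finally show ?thesis by simp
      qed
      moreover have "n0 \<in> (\<lambda>e. e w) ` S" using e0 n0_def by blast
      ultimately have "g n0 = 0"
        using poly_indep1[where c = g and N = "(\<lambda>e. e w) ` S"] S by blast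
      then show ?thesis by (simp add: g_def S0_def)
    qed
    define S' where "S' = (\<lambda>e. e(w := 0)) ` S0"
    define f' where "f' e' = f (e'(w := n0))" for e'
    have inj: "inj_on (\<lambda>e. e(w := 0)) S0"
    proof (rule inj_onI)
      fix a b assume "a \<in> S0" "b \<in> S0" "a(w := 0) = b(w := 0)"
      then show "a = b" unfolding S0_def by (auto simp: fun_eq_iff split: if_splits) (metis fun_upd_other)
    qed
    have fin': "finite S'" using S0 by (simp add: S'_def)
    have supp': "\<forall>e\<in>S'. \<forall>v. v \<notin> V \<longrightarrow> e v = 0"
        using supp by (auto simp: S'_def S0_def)
    have H': "\<forall>z. (\<Sum>e\<in>S'. f' e * (\<Prod>v\<in>V. z v ^ e v)) = 0"
      proof
        fix z
        have "(\<Sum>e\<in>S'. f' e * (\<Prod>v\<in>V. z v ^ e v)) = (\<Sum>e\<in>S0. f' (e(w := 0)) * (\<Prod>v\<in>V. z v ^ (e(w := 0)) v))"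
          unfolding S'_def by (rule sum.reindex[OF inj, unfolded comp_def])
        also have "\<dots> = (\<Sum>e\<in>S0. f e * (\<Prod>v\<in>V. z v ^ e v))"
        proof (intro sum.cong refl)
          fix e assume e: "e \<in> S0"
          have "(e(w := 0))(w := n0) = e" using e by (auto simp: S0_def)
          moreover have "(\<Prod>v\<in>V. z v ^ (e(w := 0)) v) = (\<Prod>v\<in>V. z v ^ e v)"
            using insert.hyps(2) by (intro prod.cong refl) auto
          ultimately show "f' (e(w := 0)) * (\<Prod>v\<in>V. z v ^ (e(w := 0)) v) = f e * (\<Prod>v\<in>V. z v ^ e v)"
            by (simp add: f'_def)
        qed
        also have "\<dots> = 0" by (rule A)
        finally show "(\<Sum>e\<in>S'. f' e * (\<Prod>v\<in>V. z v ^ e v)) = 0" .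
      qed
    have "\<forall>e\<in>S'. f' e = 0" using insert.IH fin' supp' H' by blast
    moreover have "e0(w := 0) \<in> S'" using S0 by (auto simp: S'_def)
    moreover have "(e0(w := 0))(w := n0) = e0" by (auto simp: n0_def)
    ultimately show "f e0 = 0" by (metis f'_def)
  qed
qed

lemma mon_indep:
  assumes S: "finite S" and H: "\<And>z. (\<Sum>e\<in>S. f e * mnm e z) = 0" and e: "e \<in> S"
  shows "f e = 0"
  using indep_gen[of "UNIV :: vr set"] S H e unfolding mnm_def by auto

lemma InI_span:
  assumes "InI D1 D2 f"
  shows "\<exists>lam'. \<forall>z. f z = (\<Sum>c\<in>Cols D1 D2. lam' c * colF d0 c z)"
  using assms
proof (induction rule: InI.induct)
  case (base e)
  define c0 where "c0 = ((\<lambda>_::vr. 0::nat), e)"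
  have c0: "c0 \<in> Cols (fst (edeg e)) (snd (edeg e))" by (simp add: c0_def Cols_def deg_zero)
  have "Eval d0 e z = (\<Sum>c\<in>Cols (fst (edeg e)) (snd (edeg e)). (if c = c0 then 1 else 0) * colF d0 c z)" for z
  proof -
    have "(\<Sum>c\<in>Cols (fst (edeg e)) (snd (edeg e)). (if c = c0 then 1 else 0) * colF d0 c z)
        = (\<Sum>c\<in>Cols (fst (edeg e)) (snd (edeg e)). if c = c0 then colF d0 c z else 0)"
      by (intro sum.cong refl) simp
    also have "\<dots> = colF d0 c0 z" using c0 by (simp add: finite_Cols)
    also have "\<dots> = Eval d0 e z" by (simp add: colF_def c0_def mnm_zero)
    finally show ?thesis by simp
  qed
  then show ?case by (intro exI[of _ "\<lambda>c. if c = c0 then 1 else 0"]) simp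
next
  case (zero D1 D2)
  show ?case by (rule exI[of _ "\<lambda>_. 0"]) simp
next
  case (add D1 D2 f g)
  from add.IH obtain l1 l2 where l1: "\<forall>z. f z = (\<Sum>c\<in>Cols D1 D2. l1 c * colF d0 c z)"
    and l2: "\<forall>z. g z = (\<Sum>c\<in>Cols D1 D2. l2 c * colF d0 c z)" by blast
  show ?case
    by (rule exI[of _ "\<lambda>c. l1 c + l2 c"]) (simp add: l1 l2 sum.distrib distrib_right)
next
  case (smul D1 D2 f a)
  from smul.IH obtain l1 where l1: "\<forall>z. f z = (\<Sum>c\<in>Cols D1 D2. l1 c * colF d0 c z)" by blast
  show ?case
    by (rule exI[of _ "\<lambda>c. a * l1 c"]) (simp add: l1 sum_distrib_left mult_ac)
next
  case (mulmon D1 D2 f t)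
  from mulmon.IH obtain l1 where l1: "\<forall>z. f z = (\<Sum>c\<in>Cols D1 D2. l1 c * colF d0 c z)" by blast
  define sh where "sh c = (eadd t (fst c), snd c)" for c :: "ex \<times> (3 + 8)"
  have inj: "inj_on sh (Cols D1 D2)"
  proof (rule inj_onI)
    fix a b assume "sh a = sh b"
    then have "eadd t (fst a) = eadd t (fst b)" "snd a = snd b" by (auto simp: sh_def)
    then have "fst a = fst b" by (auto simp: eadd_def fun_eq_iff)
    then show "a = b" using \<open>snd a = snd b\<close> by (simp add: prod_eq_iff)
  qed
  have img: "sh ` Cols D1 D2 \<subseteq> Cols (D1 + degx t) (D2 + dega t)"
    by (auto simp: sh_def Cols_def degx_add dega_add)
  define l2 where "l2 c' = (if c' \<in> sh ` Cols D1 D2 then l1 (inv_into (Cols D1 D2) sh c') else 0)" for c'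
  have "mnm t z * f z = (\<Sum>c\<in>Cols (D1 + degx t) (D2 + dega t). l2 c * colF d0 c z)" for z
  proof -
    have "mnm t z * f z = (\<Sum>c\<in>Cols D1 D2. l1 c * colF d0 (sh c) z)"
      by (simp add: l1 sum_distrib_left sh_def colF_def mnm_add mult_ac)
    also have "\<dots> = (\<Sum>c\<in>Cols D1 D2. l2 (sh c) * colF d0 (sh c) z)"
      by (intro sum.cong refl) (simp add: l2_def inv_into_f_f[OF inj])
    also have "\<dots> = (\<Sum>c\<in>sh ` Cols D1 D2. l2 c * colF d0 c z)"
      by (rule sum.reindex[OF inj, unfolded comp_def, symmetric])
    also have "\<dots> = (\<Sum>c\<in>Cols (D1 + degx t) (D2 + dega t). l2 c * colF d0 c z)"
      by (rule sum.mono_neutral_left[OF finite_Cols img]) (auto simp: l2_def)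
    finally show ?thesis .
  qed
  then show ?case by blast
qed

lemma wit_coeffs:
  assumes r: "r \<in> Mons 33 1"
  shows "\<exists>lam'. \<forall>r'\<in>Mons 33 1. (\<Sum>c\<in>Cols 33 1. Ment d0 r' c * lam' c) = (if r' = r then 1 else 0)"
proof -
  obtain l where l: "\<forall>z. mnm r z = (\<Sum>c\<in>Cols 33 1. l c * colF d0 c z)"
    using InI_span[OF InI_mon[OF r]] by blast
  define K where "K r' = (\<Sum>c\<in>Cols 33 1. Ment d0 r' c * l c)" for r'
  have H: "(\<Sum>r'\<in>Mons 33 1. (K r' - (if r' = r then 1 else 0)) * mnm r' z) = 0" for z
  proof -
    have "(\<Sum>c\<in>Cols 33 1. l c * colF d0 c z) = (\<Sum>c\<in>Cols 33 1. \<Sum>r'\<in>Mons 33 1. l c * (Ment d0 r' c * mnm r' z))"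
      by (intro sum.cong refl) (simp add: colF_exp sum_distrib_left)
    also have "\<dots> = (\<Sum>r'\<in>Mons 33 1. K r' * mnm r' z)"
      by (subst sum.swap) (simp add: K_def sum_distrib_left sum_distrib_right mult_ac)
    finally have 1: "mnm r z = (\<Sum>r'\<in>Mons 33 1. K r' * mnm r' z)" using l by simp
    have 2: "(\<Sum>r'\<in>Mons 33 1. (if r' = r then 1 else 0) * mnm r' z) = mnm r z"
    proof -
      have "(\<Sum>r'\<in>Mons 33 1. (if r' = r then 1 else 0) * mnm r' z) = (\<Sum>r'\<in>Mons 33 1. if r' = r then mnm r' z else 0)"
        by (intro sum.cong refl) simp
      then show ?thesis using r by (simp add: finite_Mons)
    qed
    show ?thesis using 1 2 by (simp add: left_diff_distrib sum_subtractf)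
  qed
  have "\<forall>r'\<in>Mons 33 1. K r' - (if r' = r then 1 else 0) = 0"
    using mon_indep[OF finite_Mons H] by blast
  then show ?thesis unfolding K_def by (intro exI[of _ l]) auto
qed

lemma Gf_d0: "Gf d0 d0 \<noteq> 0"
proof
  let ?n = "length rl" and ?m = "length cl"
  let ?A = "Amat d0" and ?B = "Bmat d0"
  assume "Gf d0 d0 = 0"
  then have "det (?A * ?B) = 0" by (simp add: Gf_def)
  then obtain v where v: "v \<in> carrier_vec ?n" "v \<noteq> 0\<^sub>v ?n" "(?A * ?B) *\<^sub>v v = 0\<^sub>v ?n"
    using det_0_iff_vec_prod_zero[OF mult_carrier_mat[OF Amat_carrier Bmat_carrier]] by blast
  define w where "w = ?B *\<^sub>v v"
  have dw: "dim_vec w = ?m" by (simp add: w_def Bmat_def)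
  have Aw: "?A *\<^sub>v w = 0\<^sub>v ?n"
    using v(3) unfolding w_def
    by (simp add: assoc_mult_mat_vec[OF Amat_carrier Bmat_carrier v(1)])
  have Aw': "(\<Sum>j\<in>{0..<?m}. Ment d0 (rl!i) (cl!j) * w $ j) = 0" if "i < ?n" for i
  proof -
    have "(?A *\<^sub>v w) $ i = 0" using Aw that by simp
    then show ?thesis using that dw by (simp add: scalar_prod_def Amat_def)
  qed
  have wj: "w $ j = (\<Sum>i\<in>{0..<?n}. cnj (Ment d0 (rl!i) (cl!j)) * v $ i)" if "j < ?m" for j
    using that v(1) by (simp add: w_def Bmat_def scalar_prod_def)
  have cw: "cnj (w $ j) = (\<Sum>i\<in>{0..<?n}. Ment d0 (rl!i) (cl!j) * cnj (v $ i))" if "j < ?m" for j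
    using wj[OF that] by (simp add: cnj_sum)
  have "(\<Sum>j\<in>{0..<?m}. cnj (w $ j) * w $ j) = (\<Sum>j\<in>{0..<?m}. \<Sum>i\<in>{0..<?n}. cnj (v $ i) * (Ment d0 (rl!i) (cl!j) * w $ j))"
    by (intro sum.cong refl) (simp add: cw sum_distrib_left sum_distrib_right mult_ac)
  also have "\<dots> = (\<Sum>i\<in>{0..<?n}. cnj (v $ i) * (\<Sum>j\<in>{0..<?m}. Ment d0 (rl!i) (cl!j) * w $ j))"
    by (subst sum.swap) (simp add: sum_distrib_left)
  also have "\<dots> = 0" by (simp add: Aw')
  finally have S0: "(\<Sum>j\<in>{0..<?m}. cnj (w $ j) * w $ j) = 0" .
  have w0: "w $ j = 0" if "j < ?m" for j
  proof -
    have e1: "cnj (w $ j) * w $ j = complex_of_real ((cmod (w $ j))^2)" for j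
      by (subst complex_norm_square) simp
    have "(\<Sum>j\<in>{0..<?m}. complex_of_real ((cmod (w $ j))^2)) = 0" using S0 unfolding e1 .
    then have "complex_of_real (\<Sum>j\<in>{0..<?m}. (cmod (w $ j))^2) = 0" by (simp only: of_real_sum)
    then have "(\<Sum>j\<in>{0..<?m}. (cmod (w $ j))^2) = 0" by (simp only: of_real_eq_0_iff)
    then have "(cmod (w $ j))^2 = 0"
      using that by (subst (asm) sum_nonneg_eq_0_iff) auto
    then show ?thesis by simp
  qed
  have "v $ \<iota> = 0" if \<iota>: "\<iota> < ?n" for \<iota>
  proof -
    have "rl!\<iota> \<in> Mons 33 1" using rl \<iota> by (metis nth_mem)
    then obtain l where l: "\<forall>r'\<in>Mons 33 1. (\<Sum>c\<in>Cols 33 1. Ment d0 r' c * l c) = (if r' = rl!\<iota> then 1 else 0)"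
      using wit_coeffs by blast
    have E: "(\<Sum>j\<in>{0..<?m}. Ment d0 (rl!i) (cl!j) * l (cl!j)) = (if i = \<iota> then 1 else 0)" if i: "i < ?n" for i
    proof -
      have "rl!i \<in> Mons 33 1" using rl i by (metis nth_mem)
      then have "(\<Sum>c\<in>Cols 33 1. Ment d0 (rl!i) c * l c) = (if rl!i = rl!\<iota> then 1 else 0)" using l by blast
      moreover have "(rl!i = rl!\<iota>) = (i = \<iota>)" using rl(2) i \<iota> by (simp add: nth_eq_iff_index_eq)
      moreover have "(\<Sum>c\<in>Cols 33 1. Ment d0 (rl!i) c * l c) = (\<Sum>j\<in>{0..<?m}. Ment d0 (rl!i) (cl!j) * l (cl!j))"
        by (rule sum_cl)
      ultimately show ?thesis by simp
    qed
    have "cnj (v $ \<iota>) = (\<Sum>i\<in>{0..<?n}. cnj (v $ i) * (if i = \<iota> then 1 else 0))"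
    proof -
      have "(\<Sum>i\<in>{0..<?n}. cnj (v $ i) * (if i = \<iota> then 1 else 0)) = (\<Sum>i\<in>{0..<?n}. if i = \<iota> then cnj (v $ i) else 0)"
        by (intro sum.cong refl) simp
      then show ?thesis using \<iota> by simp
    qed
    also have "\<dots> = (\<Sum>i\<in>{0..<?n}. cnj (v $ i) * (\<Sum>j\<in>{0..<?m}. Ment d0 (rl!i) (cl!j) * l (cl!j)))"
      by (intro sum.cong refl) (simp add: E)
    also have "\<dots> = (\<Sum>j\<in>{0..<?m}. l (cl!j) * (\<Sum>i\<in>{0..<?n}. Ment d0 (rl!i) (cl!j) * cnj (v $ i)))"
      by (simp add: sum_distrib_left sum_distrib_right mult_ac) (rule sum.swap)
    also have "\<dots> = (\<Sum>j\<in>{0..<?m}. l (cl!j) * cnj (w $ j))"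
      by (intro sum.cong refl) (simp add: cw)
    also have "\<dots> = 0" by (simp add: w0)
    finally show ?thesis by simp
  qed
  then have "v = 0\<^sub>v ?n" using v(1) by (intro eq_vecI) auto
  then show False using v(2) by simp
qed

lemma coef_Sy: "coef c k i j = (if i < j then Sy c k i j else if i = j then Sy c k i i / 2 else 0)"
  unfolding Sy_def coef_def by auto

lemma sum_delta8: "(\<Sum>s\<in>UNIV. f s * (if s = j then 1 else 0)) = (f (j::8) :: complex)"
proof -
  have e: "(\<lambda>s. f s * (if s = j then 1 else 0)) = (\<lambda>s. if s = j then f s else 0)" by auto
  show ?thesis by (subst e) simp
qed

lemma Sy_trtr:
  assumes WV: "W ** V = Finite_Cartesian_Product.mat 1"
  shows "Sy (tr (tr c W) V) k i j = Sy c k i j"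
proof -
  have d: "(\<Sum>p\<in>UNIV. W$r$p * V$p$i) = (if r = i then 1 else 0)" for r i
  proof -
    have "(W ** V)$r$i = (if r = i then 1 else 0)" using WV by (simp add: Finite_Cartesian_Product.mat_def)
    then show ?thesis by (simp add: matrix_matrix_mult_def)
  qed
  have "Sy (tr (tr c W) V) k i j = (\<Sum>p\<in>UNIV. \<Sum>q\<in>UNIV. (\<Sum>r\<in>UNIV. \<Sum>s\<in>UNIV. Sy c k r s * W$r$p * W$s$q) * V$p$i * V$q$j)"
    by (simp add: Sy_tr)
  also have "\<dots> = (\<Sum>p\<in>UNIV. \<Sum>q\<in>UNIV. \<Sum>r\<in>UNIV. \<Sum>s\<in>UNIV. Sy c k r s * (W$r$p * V$p$i) * (W$s$q * V$q$j))"
    by (simp add: sum_distrib_left sum_distrib_right mult_ac)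
  also have "\<dots> = (\<Sum>r\<in>UNIV. \<Sum>s\<in>UNIV. Sy c k r s * (\<Sum>p\<in>UNIV. W$r$p * V$p$i) * (\<Sum>q\<in>UNIV. W$s$q * V$q$j))"
    by (rule sum4_prod[symmetric])
  also have "\<dots> = (\<Sum>r\<in>UNIV. \<Sum>s\<in>UNIV. (Sy c k r s * (if r = i then 1 else 0)) * (if s = j then 1 else 0))"
    by (simp only: d)
  also have "\<dots> = (\<Sum>r\<in>UNIV. Sy c k r j * (if r = i then 1 else 0))" by (simp only: sum_delta8)
  also have "\<dots> = Sy c k i j" by (simp only: sum_delta8)
  finally show ?thesis .
qed

lemma coef_trtr:
  assumes "W ** V = Finite_Cartesian_Product.mat 1"
  shows "coef (tr (tr c W) V) k i j = coef c k i j"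
  by (simp add: coef_Sy Sy_trtr[OF assms])

lemma pf_tr: "(\<lambda>c. tr c V v) \<in> poly_fun"
proof -
  obtain k i j where v: "v = (k,i,j)" by (cases v) auto
  have B: "(\<lambda>c. Bm c V k p q) \<in> poly_fun" for p q
    unfolding Bm_def by (intro pf_sum pf_mult pf_coef poly_fun.const) auto
  show ?thesis unfolding v tr_def
    by (simp, intro pf_if pf_add B poly_fun.const)
qed

section \<open>An invertible matrix carrying one plane to another\<close>

lemma indep3_vec:
  assumes "lin_indep3 u1 u2 u3"
  shows "vec.independent {u1, u2, u3}" "u1 \<noteq> u2" "u1 \<noteq> u3" "u2 \<noteq> u3"
proof -
  have L: "\<And>a b d. a *s u1 + b *s u2 + d *s u3 = 0 \<Longrightarrow> a = 0 \<and> b = 0 \<and> d = 0"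
    using assms unfolding lin_indep3_def by blast
  show n12: "u1 \<noteq> u2"
  proof
    assume "u1 = u2"
    then have "1 *s u1 + (-1) *s u2 + 0 *s u3 = 0" by simp
    from L[OF this] show False by simp
  qed
  show n13: "u1 \<noteq> u3"
  proof
    assume "u1 = u3"
    then have "1 *s u1 + 0 *s u2 + (-1) *s u3 = 0" by simp
    from L[OF this] show False by simp
  qed
  show n23: "u2 \<noteq> u3"
  proof
    assume "u2 = u3"
    then have "0 *s u1 + 1 *s u2 + (-1) *s u3 = 0" by simp
    from L[OF this] show False by simp
  qed
  show "vec.independent {u1, u2, u3}"
  proof (rule vec.independent_if_scalars_zero)
    fix f x assume s: "(\<Sum>x\<in>{u1, u2, u3}. f x *s x) = 0" and x: "x \<in> {u1, u2, u3}"
    have "f u1 *s u1 + f u2 *s u2 + f u3 *s u3 = 0" using s n12 n13 n23 by (simp add: add.assoc)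
    from L[OF this] have "f u1 = 0 \<and> f u2 = 0 \<and> f u3 = 0" .
    then show "f x = 0" using x by auto
  qed simp
qed

lemma card_basis8:
  assumes "vec.independent (B :: (complex^8) set)" "vec.span B = UNIV"
  shows "card B = 8"
proof -
  have "vec.dim (vec.span B) = card B" by (rule vec.dim_span_eq_card_independent[OF assms(1)])
  then show ?thesis using assms(2) vec_dim_card[where 'a = complex and 'n = 8] by simp
qed

lemma exV:
  assumes p: "lin_indep3 p1 p2 p3" and u: "lin_indep3 u1 u2 u3"
  shows "\<exists>V W. V ** W = Finite_Cartesian_Product.mat 1 \<and> W ** V = Finite_Cartesian_Product.mat 1
      \<and> V *v p1 = u1 \<and> V *v p2 = u2 \<and> V *v p3 = (u3 :: complex^8)"
proof -
  note P = indep3_vec[OF p] and U = indep3_vec[OF u]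
  define Em where "Em = vec.extend_basis {p1, p2, p3}"
  define Eu where "Eu = vec.extend_basis {u1, u2, u3}"
  have Em1: "{p1,p2,p3} \<subseteq> Em" unfolding Em_def by (rule vec.extend_basis_superset[OF P(1)])
  have Em2: "vec.independent Em" unfolding Em_def by (rule vec.independent_extend_basis[OF P(1)])
  have Em3: "vec.span Em = UNIV" unfolding Em_def by (rule vec.span_extend_basis[OF P(1)])
  have Eu1: "{u1,u2,u3} \<subseteq> Eu" unfolding Eu_def by (rule vec.extend_basis_superset[OF U(1)])
  have Eu2: "vec.independent Eu" unfolding Eu_def by (rule vec.independent_extend_basis[OF U(1)])
  have Eu3: "vec.span Eu = UNIV" unfolding Eu_def by (rule vec.span_extend_basis[OF U(1)])
  have fm: "finite Em" by (rule vec.finiteI_independent[OF Em2])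
  have fu: "finite Eu" by (rule vec.finiteI_independent[OF Eu2])
  have cm: "card Em = 8" by (rule card_basis8[OF Em2 Em3])
  have cu: "card Eu = 8" by (rule card_basis8[OF Eu2 Eu3])
  have c3p: "card {p1,p2,p3} = 3" using P(2-4) by simp
  have c3u: "card {u1,u2,u3} = 3" using U(2-4) by simp
  have "card (Em - {p1,p2,p3}) = 5"
    using card_Diff_subset[OF _ Em1] cm c3p by simp
  moreover have "card (Eu - {u1,u2,u3}) = 5"
    using card_Diff_subset[OF _ Eu1] cu c3u by simp
  ultimately have "card (Em - {p1,p2,p3}) = card (Eu - {u1,u2,u3})" by simp
  moreover have "finite (Em - {p1,p2,p3})" "finite (Eu - {u1,u2,u3})" using fm fu by simp_all
  ultimately obtain h0 where h0: "bij_betw h0 (Em - {p1,p2,p3}) (Eu - {u1,u2,u3})"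
    using finite_same_card_bij by metis
  have h0i: "h0 ` (Em - {p1,p2,p3}) = Eu - {u1,u2,u3}" using h0 by (simp add: bij_betw_def)
  define g where "g b = (if b = p1 then u1 else if b = p2 then u2 else if b = p3 then u3 else h0 b)" for b
  have g1: "g p1 = u1" and g2: "g p2 = u2" and g3: "g p3 = u3"
    using P(2-4) by (simp_all add: g_def)
  have gEm: "g ` Em = Eu"
  proof
    show "g ` Em \<subseteq> Eu"
    proof
      fix y assume "y \<in> g ` Em"
      then obtain b where b: "b \<in> Em" "y = g b" by blast
      show "y \<in> Eu"
      proof (cases "b \<in> {p1,p2,p3}")
        case True
        then have "y \<in> {u1,u2,u3}" using b(2) g1 g2 g3 by auto
        then show ?thesis using Eu1 by blast
      next
        case False
        then have "y = h0 b" using b(2) by (simp add: g_def)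
        moreover have "h0 b \<in> Eu - {u1,u2,u3}" using h0i b(1) False by blast
        ultimately show ?thesis by simp
      qed
    qed
    show "Eu \<subseteq> g ` Em"
    proof
      fix y assume y: "y \<in> Eu"
      show "y \<in> g ` Em"
      proof (cases "y \<in> {u1,u2,u3}")
        case True
        then have "y = g p1 \<or> y = g p2 \<or> y = g p3" using g1 g2 g3 by auto
        then show ?thesis using Em1 by blast
      next
        case False
        then have "y \<in> h0 ` (Em - {p1,p2,p3})" using h0i y by blast
        then obtain b where b: "b \<in> Em - {p1,p2,p3}" "y = h0 b" by blast
        then have "g b = y" by (simp add: g_def)
        then show ?thesis using b(1) by blast
      qed
    qed
  qed
  define f where "f = vec.construct Em g"
  have lf: "Vector_Spaces.linear (*s) (*s) f" unfolding f_def by (rule vec.linear_construct[OF Em2])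
  have fb: "b \<in> Em \<Longrightarrow> f b = g b" for b unfolding f_def by (rule vec.construct_basis[OF Em2])
  have fEm: "f ` Em = Eu" using gEm fb by (simp add: image_def)
  have "range f = UNIV"
  proof -
    have "vec.span (f ` Em) = f ` vec.span Em" by (rule vec.linear_span_image[OF lf])
    then show ?thesis using fEm Em3 Eu3 by simp
  qed
  define V where "V = matrix f"
  have Vx: "V *v x = f x" for x unfolding V_def by (rule matrix_works[OF lf])
  have "surj (\<lambda>x. V *v x)" using \<open>range f = UNIV\<close> by (simp add: Vx)
  then obtain W where VW: "V ** W = Finite_Cartesian_Product.mat 1"
    using matrix_right_invertible_surjective by blast
  then have WV: "W ** V = Finite_Cartesian_Product.mat 1" by (simp add: matrix_left_right_inverse)
  have "p1 \<in> Em" "p2 \<in> Em" "p3 \<in> Em" using Em1 by auto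
  then have "V *v p1 = u1" "V *v p2 = u2" "V *v p3 = u3"
    by (simp_all add: Vx fb g1 g2 g3)
  then show ?thesis using VW WV by blast
qed

lemma UNIV_8: "UNIV = {0,1,2,3,4,5,6,7::8}"
  using exhaust_8 by auto

definition tt :: "8 \<Rightarrow> complex" where
  "tt i = (if i = 0 then 0 else if i = 1 then 1 else if i = 2 then -1 else if i = 3 then 2
     else if i = 4 then -2 else if i = 5 then 3 else if i = 6 then -3 else 0)"

definition m0 :: "complex^8" where "m0 = (\<chi> i. if i = 7 then 0 else 1)"
definition m1 :: "complex^8" where "m1 = (\<chi> i. tt i)"
definition m2 :: "complex^8" where "m2 = (\<chi> i. if i = 7 then 1 else tt i ^ 2)"

lemma m_indep: "lin_indep3 m0 m1 m2"
  unfolding lin_indep3_def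
proof (intro allI impI)
  fix a b d :: complex
  assume h: "a *s m0 + b *s m1 + d *s m2 = 0"
  have "(a *s m0 + b *s m1 + d *s m2) $ 0 = 0" "(a *s m0 + b *s m1 + d *s m2) $ 1 = 0"
       "(a *s m0 + b *s m1 + d *s m2) $ 2 = 0" using h by simp_all
  then have "a = 0" "a + b + d = 0" "a - b + d = 0"
    by (simp_all add: m0_def m1_def m2_def tt_def)
  then show "a = 0 \<and> b = 0 \<and> d = 0" by auto
qed

lemma expand_sq:
  fixes L x y w :: "8 \<Rightarrow> complex"
  shows "(\<Sum>i\<in>UNIV. L i * (a * x i + b * y i + d * w i) ^ 2)
     = a^2 * (\<Sum>i\<in>UNIV. L i * x i * x i) + b^2 * (\<Sum>i\<in>UNIV. L i * y i * y i)
       + d^2 * (\<Sum>i\<in>UNIV. L i * w i * w i) + 2 * a * b * (\<Sum>i\<in>UNIV. L i * x i * y i)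
       + 2 * a * d * (\<Sum>i\<in>UNIV. L i * x i * w i) + 2 * b * d * (\<Sum>i\<in>UNIV. L i * y i * w i)"
proof -
  have e: "L i * (a * x i + b * y i + d * w i) ^ 2 = a^2 * (L i * x i * x i) + b^2 * (L i * y i * y i)
       + d^2 * (L i * w i * w i) + 2 * a * b * (L i * x i * y i)
       + 2 * a * d * (L i * x i * w i) + 2 * b * d * (L i * y i * w i)" for i
    by (simp add: power2_eq_square algebra_simps)
  show ?thesis unfolding e by (simp add: sum.distrib sum_distrib_left)
qed

lemma sum_8: "(\<Sum>i\<in>UNIV. f i) = f 0 + f 1 + f 2 + f 3 + f 4 + f 5 + f 6 + (f (7::8) :: complex)"
  unfolding UNIV_8 by (simp add: algebra_simps)

definition mv :: "nat \<Rightarrow> 8 \<Rightarrow> complex" where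
  "mv p i = (if p = 0 then m0 $ i else if p = 1 then m1 $ i else m2 $ i)"

lemma lam_vals:
  "lam k 0 = (if k = 1 then -10 else if k = 2 then -10 else -6)"
  "lam k 1 = (if k = 1 then 10 else if k = 2 then 5 else 4)"
  "lam k 2 = (if k = 1 then 5 else if k = 2 then 10 else 4)"
  "lam k 3 = (if k = 1 then -5 else if k = 2 then -1 else -1)"
  "lam k 4 = (if k = 1 then -1 else if k = 2 then -5 else -1)"
  "lam k 5 = (if k = 1 then 1 else 0)"
  "lam k 6 = (if k = 1 then 0 else if k = 2 then 1 else 0)"
  "lam k 7 = (if k = 1 then 0 else if k = 2 then 0 else 24)"
  by (simp_all add: lam_def rw_def)

lemma mv_vals:
  "mv p 0 = (if p = 0 then 1 else 0)"
  "mv p 1 = 1"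
  "mv p 2 = (if p = 1 then -1 else 1)"
  "mv p 3 = (if p = 0 then 1 else if p = 1 then 2 else 4)"
  "mv p 4 = (if p = 0 then 1 else if p = 1 then -2 else 4)"
  "mv p 5 = (if p = 0 then 1 else if p = 1 then 3 else 9)"
  "mv p 6 = (if p = 0 then 1 else if p = 1 then -3 else 9)"
  "mv p 7 = (if p = 0 then 0 else if p = 1 then 0 else 1)"
  by (simp_all add: mv_def m0_def m1_def m2_def tt_def)

lemma sums_zero:
  assumes "p \<le> 2" "q \<le> 2"
  shows "(\<Sum>i\<in>UNIV. lam k i * mv p i * mv q i) = 0"
proof -
  have "p = 0 \<or> p = 1 \<or> p = 2" "q = 0 \<or> q = 1 \<or> q = 2" using assms by auto
  then show ?thesis
    unfolding sum_8 lam_vals mv_vals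
    using exhaust_3[of k]
    by (elim disjE) simp_all
qed

lemma plane_d0: "quad d0 k (a *s m0 + b *s m1 + d *s m2) = 0"
proof -
  have "quad d0 k (a *s m0 + b *s m1 + d *s m2)
      = (\<Sum>i\<in>UNIV. lam k i * (a * mv 0 i + b * mv 1 i + d * mv 2 i) ^ 2)"
    by (simp add: quad_d0 mv_def)
  also have "\<dots> = 0"
    unfolding expand_sq by (simp add: sums_zero)
  finally show ?thesis .
qed

theorem lemma1p6:
  fixes u1 u2 u3 :: "complex ^ 8"
  assumes "lin_indep3 u1 u2 u3"
  shows "\<exists>F \<in> poly_fun.
           (\<exists>c. contains_plane c u1 u2 u3 \<and> F c \<noteq> 0) \<and>
           (\<forall>c. contains_plane c u1 u2 u3 \<and> F c \<noteq> 0 \<longrightarrow> smooth_intersection c)"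
proof -
  obtain V W where VW: "V ** W = Finite_Cartesian_Product.mat 1" "W ** V = Finite_Cartesian_Product.mat 1"
    and Vm: "V *v m0 = u1" "V *v m1 = u2" "V *v m2 = u3"
    using exV[OF m_indep assms] by blast
  define F where "F c = Gf d0 (tr c V)" for c
  have pF: "F \<in> poly_fun"
    unfolding F_def by (rule pf_compose[OF pf_Gf pf_tr])
  define cs where "cs = tr d0 W"
  have WVx: "W *v (V *v x) = x" for x
    using VW(2) by (simp add: matrix_vector_mul_assoc)
  have Wu: "W *v u1 = m0" "W *v u2 = m1" "W *v u3 = m2"
    by (simp_all add: Vm[symmetric] WVx)
  have cp: "contains_plane cs u1 u2 u3"
    unfolding contains_plane_def
  proof (intro allI)
    fix k a b d
    have "W *v (a *s u1 + b *s u2 + d *s u3) = a *s m0 + b *s m1 + d *s m2"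
      by (simp add: vec.add vec.scale Wu)
    then show "quad cs k (a *s u1 + b *s u2 + d *s u3) = 0"
      by (simp add: cs_def quad_tr plane_d0)
  qed
  have "F cs = Gf d0 d0"
    unfolding F_def cs_def by (rule Gf_coef) (rule coef_trtr[OF VW(2)])
  then have "F cs \<noteq> 0" using Gf_d0 by simp
  moreover have "smooth_intersection c" if "F c \<noteq> 0" for c
    using smooth_tr[OF VW(1) generic[of d0 "tr c V"]] that by (simp add: F_def)
  ultimately show ?thesis using pF cp by blast
qed

end
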